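(* Let $r>0$, let $U=\{(x_1,\dots,x_n)\in\mathbb{R}^n:|x_1|+\cdots+|x_n|\le r\}$, and let $\Lambda\subset\mathbb{R}^n$ be the lattice generated by $d_1\mathbf e_1,\dots,d_n\mathbf e_n$ with all $d_i>0$ ($\mathbf e_i$ the standard unit vectors). For $S\subseteq\{1,\dots,n\}$ let $d_S=\sum_{i\in S}d_i$. Then $$\#(\Lambda\cap U)\ge\frac1{n!\,d_1\cdots d_n}\sum_{S\subseteq\{1,\dots,n\},\ d_S\le r}(r-d_S)^n.$$ *)

theory Defs
  imports "HOL-Analysis.Analysis"
begin

end

theory Submission
  imports Defs "HOL-Analysis.Analysis"
begin

lemma count_simplex:
  fixes d :: "'n::finite \<Rightarrow> real" and t :: real
  assumes t: "t \<ge> 0" and d: "\<And>i. d i > 0"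
  defines "N \<equiv> {m::'n\<Rightarrow>nat. (\<Sum>i\<in>UNIV. real (m i) * d i) \<le> t}"
  shows "finite N \<and> t ^ CARD('n) / fact CARD('n) \<le> real (card N) * (\<Prod>i\<in>UNIV. d i)"
proof -
  interpret product_sigma_finite "\<lambda>_. lborel" by standard
  let ?M = "Pi\<^sub>M (UNIV::'n set) (\<lambda>_. lborel)"
  let ?T = "{x::'n\<Rightarrow>real. (\<forall>i\<in>UNIV. 0 \<le> x i) \<and> sum x UNIV \<le> t}"
  define B where "B m = Pi\<^sub>E UNIV (\<lambda>i. {real (m i) * d i ..< (real (m i) + 1) * d i})" for m :: "'n \<Rightarrow> nat"
  have sp: "space ?M = UNIV" by (simp add: space_PiM)
  have finN: "finite N"
  proof (rule finite_subset)
    show "N \<subseteq> Pi\<^sub>E UNIV (\<lambda>i. {0..nat \<lfloor>t / d i\<rfloor>})"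
    proof
      fix m assume "m \<in> N"
      hence s: "(\<Sum>i\<in>UNIV. real (m i) * d i) \<le> t" by (simp add: N_def)
      have "m i \<le> nat \<lfloor>t / d i\<rfloor>" for i
      proof -
        have "real (m i) * d i \<le> (\<Sum>i\<in>UNIV. real (m i) * d i)"
          using d by (intro member_le_sum) (simp_all add: less_imp_le)
        hence "real (m i) \<le> t / d i" using s d[of i] by (simp add: field_simps)
        thus ?thesis by linarith
      qed
      thus "m \<in> Pi\<^sub>E UNIV (\<lambda>i. {0..nat \<lfloor>t / d i\<rfloor>})" by auto
    qed
  qed (intro finite_PiE; auto)
  have Bm: "B m \<in> sets ?M" for m unfolding B_def by (intro sets_PiM_I_finite) auto
  have EB: "emeasure ?M (B m) = ennreal (\<Prod>i\<in>UNIV. d i)" for m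
  proof -
    have "emeasure ?M (B m) = (\<Prod>i\<in>UNIV. emeasure lborel {real (m i) * d i ..< (real (m i) + 1) * d i})"
      unfolding B_def by (intro emeasure_PiM) auto
    also have "\<dots> = (\<Prod>i\<in>UNIV. ennreal (d i))"
      using d by (intro prod.cong refl) (subst emeasure_lborel_Ico; simp add: algebra_simps less_imp_le)
    also have "\<dots> = ennreal (\<Prod>i\<in>UNIV. d i)"
      by (rule prod_ennreal) (use d in \<open>auto intro: less_imp_le\<close>)
    finally show ?thesis .
  qed
  have cover: "?T \<inter> space ?M \<subseteq> (\<Union>m\<in>N. B m)"
  proof
    fix x assume "x \<in> ?T \<inter> space ?M"
    hence x0: "\<And>i. 0 \<le> x i" and xs: "sum x UNIV \<le> t" by auto
    define m where "m i = nat \<lfloor>x i / d i\<rfloor>" for i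
    have le: "real (m i) * d i \<le> x i" and lt: "x i < (real (m i) + 1) * d i" for i
    proof -
      have "real (m i) = of_int \<lfloor>x i / d i\<rfloor>" using x0[of i] d[of i] by (simp add: m_def)
      moreover have "of_int \<lfloor>x i / d i\<rfloor> \<le> x i / d i" by linarith
      hence "of_int \<lfloor>x i / d i\<rfloor> * d i \<le> x i" using pos_le_divide_eq[OF d[of i]] by blast
      moreover have "x i / d i < of_int \<lfloor>x i / d i\<rfloor> + 1" by linarith
      hence "x i < (of_int \<lfloor>x i / d i\<rfloor> + 1) * d i" using pos_divide_less_eq[OF d[of i]] by blast
      ultimately show "real (m i) * d i \<le> x i" "x i < (real (m i) + 1) * d i" by simp_all
    qed
    have "m \<in> N" unfolding N_def using sum_mono[of UNIV "\<lambda>i. real (m i) * d i" x] le xs by force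
    moreover have "x \<in> B m" using le lt by (auto simp: B_def)
    ultimately show "x \<in> (\<Union>m\<in>N. B m)" by blast
  qed
  have "ennreal (t ^ CARD('n) / fact CARD('n)) = emeasure ?M (?T \<inter> space ?M)"
    using emeasure_std_simplex_aux[of "UNIV::'n set" t] t by simp
  also have "\<dots> \<le> emeasure ?M (\<Union>m\<in>N. B m)"
    using cover Bm finN by (intro emeasure_mono) auto
  also have "\<dots> \<le> (\<Sum>m\<in>N. emeasure ?M (B m))"
    using Bm finN by (intro emeasure_subadditive_finite) auto
  also have "\<dots> = ennreal (real (card N) * (\<Prod>i\<in>UNIV. d i))"
    by (simp add: EB ennreal_of_nat_eq_real_of_nat ennreal_mult')
  finally have "ennreal (t ^ CARD('n) / fact CARD('n)) \<le> ennreal (real (card N) * (\<Prod>i\<in>UNIV. d i))" .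
  hence "t ^ CARD('n) / fact CARD('n) \<le> real (card N) * (\<Prod>i\<in>UNIV. d i)"
  proof -
    have "0 \<le> real (card N) * (\<Prod>i\<in>UNIV. d i)"
      using d by (intro mult_nonneg_nonneg prod_nonneg) (auto intro: less_imp_le)
    thus ?thesis using \<open>ennreal _ \<le> _\<close> ennreal_le_iff by blast
  qed
  with finN show ?thesis by blast
qed

theorem lemma2p5p3:
  fixes r :: real and d :: "'n::finite \<Rightarrow> real"
  assumes "r > 0" and "\<And>i. d i > 0"
  defines "U \<equiv> {x :: real^'n. (\<Sum>i\<in>UNIV. \<bar>x $ i\<bar>) \<le> r}"
    and "\<Lambda> \<equiv> {x :: real^'n. \<forall>i. \<exists>k::int. x $ i = of_int k * d i}"
  shows "real (card (\<Lambda> \<inter> U)) \<ge>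
    (1 / (fact CARD('n) * (\<Prod>i\<in>UNIV. d i))) *
      (\<Sum>S\<in>{S. S \<subseteq> (UNIV :: 'n set) \<and> (\<Sum>i\<in>S. d i) \<le> r}. (r - (\<Sum>i\<in>S. d i)) ^ CARD('n))"
proof -
  note d = assms(2)
  define F where "F = {S. S \<subseteq> (UNIV :: 'n set) \<and> (\<Sum>i\<in>S. d i) \<le> r}"
  define N where "N S = {m::'n\<Rightarrow>nat. (\<Sum>i\<in>UNIV. real (m i) * d i) \<le> r - (\<Sum>i\<in>S. d i)}" for S
  define \<phi> where "\<phi> S m = (\<chi> i. (if i \<in> S then - (real (m i) + 1) else real (m i)) * d i)"
    for S :: "'n set" and m :: "'n \<Rightarrow> nat"
  define P where "P = (\<Prod>i\<in>UNIV. d i)"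
  have P0: "P > 0" unfolding P_def using d by (intro prod_pos) auto
  have finF: "finite F" by simp
  have CN: "finite (N S) \<and> (r - (\<Sum>i\<in>S. d i)) ^ CARD('n) / fact CARD('n) \<le> real (card (N S)) * P"
    if "S \<in> F" for S
    unfolding N_def P_def using that d by (intro count_simplex) (auto simp: F_def)
  have inj: "inj_on (\<phi> S) (N S)" for S
  proof
    fix m m' assume "\<phi> S m = \<phi> S m'"
    hence e: "(if i \<in> S then - (real (m i) + 1) else real (m i)) * d i =
              (if i \<in> S then - (real (m' i) + 1) else real (m' i)) * d i" for i
    proof -
      have "\<phi> S m $ i = \<phi> S m' $ i" using \<open>\<phi> S m = \<phi> S m'\<close> by simp
      thus ?thesis by (simp add: \<phi>_def)
    qed
    show "m = m'"
    proof
      fix i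
      from e[of i] d[of i] show "m i = m' i" by (cases "i \<in> S") auto
    qed
  qed
  have sign: "\<phi> S m $ i < 0 \<longleftrightarrow> i \<in> S" for S m i
  proof (cases "i \<in> S")
    case True
    have "(- (real (m i) + 1)) * d i < 0" by (rule mult_neg_pos) (use d in auto)
    thus ?thesis using True by (simp add: \<phi>_def)
  next
    case False
    have "0 \<le> real (m i) * d i" using d[of i] by simp
    thus ?thesis using False by (simp add: \<phi>_def)
  qed
  have disj: "\<phi> S ` N S \<inter> \<phi> S' ` N S' = {}" if "S \<noteq> S'" for S S'
  proof -
    { fix x assume "x \<in> \<phi> S ` N S" "x \<in> \<phi> S' ` N S'"
      then obtain m m' where "x = \<phi> S m" "x = \<phi> S' m'" by blast
      hence e: "\<phi> S m = \<phi> S' m'" by simp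
      have "i \<in> S \<longleftrightarrow> i \<in> S'" for i using sign[of S m i] sign[of S' m' i] e by simp
      hence False using that by blast }
    thus ?thesis by blast
  qed
  have sub: "(\<Union>S\<in>F. \<phi> S ` N S) \<subseteq> \<Lambda> \<inter> U"
  proof safe
    fix S m assume S: "S \<in> F" and m: "m \<in> N S"
    show "\<phi> S m \<in> \<Lambda>" unfolding \<Lambda>_def \<phi>_def mem_Collect_eq
    proof (intro allI)
      fix i
      show "\<exists>k::int. (\<chi> i. (if i \<in> S then - (real (m i) + 1) else real (m i)) * d i) $ i = of_int k * d i"
        by (rule exI[of _ "if i \<in> S then - (int (m i) + 1) else int (m i)"]) auto
    qed
    have ab: "\<bar>\<phi> S m $ i\<bar> = real (m i) * d i + (if i \<in> S then d i else 0)" for i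
    proof (cases "i \<in> S")
      case True
      have "\<bar>- (real (m i) + 1) * d i\<bar> = (real (m i) + 1) * d i"
        using d[of i] by (simp add: abs_mult)
      thus ?thesis using True by (simp add: \<phi>_def distrib_right)
    next
      case False
      thus ?thesis using d[of i] by (simp add: \<phi>_def abs_mult)
    qed
    have "(\<Sum>i\<in>UNIV. \<bar>\<phi> S m $ i\<bar>) = (\<Sum>i\<in>UNIV. real (m i) * d i) + (\<Sum>i\<in>S. d i)"
      by (simp add: ab sum.distrib sum.If_cases)
    also have "\<dots> \<le> r" using m by (simp add: N_def)
    finally show "\<phi> S m \<in> U" by (simp add: U_def)
  qed
  have finLU: "finite (\<Lambda> \<inter> U)"
  proof (rule finite_subset)
    define B where "B i = \<lceil>r / d i\<rceil>" for i
    show "\<Lambda> \<inter> U \<subseteq> (\<lambda>k. \<chi> i. of_int (k i) * d i) ` Pi\<^sub>E UNIV (\<lambda>i. {-B i..B i})"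
    proof
      fix x assume x: "x \<in> \<Lambda> \<inter> U"
      have "\<forall>i. \<exists>k::int. x $ i = of_int k * d i" using x by (simp add: \<Lambda>_def)
      define k where "k i = (SOME k::int. x $ i = of_int k * d i)" for i
      have k: "x $ i = of_int (k i) * d i" for i
      proof -
        have "\<exists>k::int. x $ i = of_int k * d i" using \<open>\<forall>i. \<exists>k::int. x $ i = of_int k * d i\<close> by (rule spec)
        thus ?thesis unfolding k_def by (rule someI_ex)
      qed
      have xs: "(\<Sum>i\<in>UNIV. \<bar>x $ i\<bar>) \<le> r" using x by (simp add: U_def)
      have "k i \<in> {-B i..B i}" for i
      proof -
        have "\<bar>x $ i\<bar> \<le> (\<Sum>i\<in>UNIV. \<bar>x $ i\<bar>)" by (rule member_le_sum) auto
        hence "\<bar>of_int (k i)\<bar> * d i \<le> r" using xs k[of i] d[of i] by (simp add: abs_mult)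
        hence "\<bar>of_int (k i)\<bar> \<le> r / d i" using pos_le_divide_eq[OF d[of i]] by blast
        hence "\<bar>real_of_int (k i)\<bar> \<le> real_of_int (B i)" unfolding B_def using le_of_int_ceiling[of "r / d i"] by linarith
        hence "\<bar>k i\<bar> \<le> B i" by (metis of_int_abs of_int_le_iff)
        thus ?thesis by (simp add: abs_le_iff)
      qed
      hence "k \<in> Pi\<^sub>E UNIV (\<lambda>i. {-B i..B i})" by auto
      moreover have "x = (\<chi> i. of_int (k i) * d i)" using k by (simp add: vec_eq_iff)
      ultimately show "x \<in> (\<lambda>k. \<chi> i. of_int (k i) * d i) ` Pi\<^sub>E UNIV (\<lambda>i. {-B i..B i})" by blast
    qed
  qed (intro finite_imageI finite_PiE; simp)
  have "(\<Sum>S\<in>F. (r - (\<Sum>i\<in>S. d i)) ^ CARD('n)) / (fact CARD('n) * P)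
        = (\<Sum>S\<in>F. (r - (\<Sum>i\<in>S. d i)) ^ CARD('n) / fact CARD('n) / P)"
    by (simp add: sum_divide_distrib divide_divide_eq_left)
  also have "\<dots> \<le> (\<Sum>S\<in>F. real (card (N S)))"
  proof (rule sum_mono)
    fix S assume "S \<in> F"
    thus "(r - (\<Sum>i\<in>S. d i)) ^ CARD('n) / fact CARD('n) / P \<le> real (card (N S))"
      using CN[of S] P0 by (simp add: pos_divide_le_eq mult_ac)
  qed
  also have "\<dots> = real (\<Sum>S\<in>F. card (\<phi> S ` N S))"
    by (simp add: card_image[OF inj])
  also have "(\<Sum>S\<in>F. card (\<phi> S ` N S)) = card (\<Union>S\<in>F. \<phi> S ` N S)"
    using CN disj by (intro card_UN_disjoint[symmetric] finF) auto
  also have "\<dots> \<le> card (\<Lambda> \<inter> U)" by (intro card_mono finLU sub)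
  finally show ?thesis by (simp add: F_def P_def)
qed
end
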